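(* Let $\Sigma=(\mathbf{x},\mathbf{F})$ be an LP seed of rank $n\ge2$ satisfying Condition 1.2. Then $$R[x_1,x_2^{\pm1},\dots,x_n^{\pm1}]\cap R[x_1^{\pm1},x_2,x'_2,\dots,x_n,x'_n]=R[x_1,x_2,x'_2,\dots,x_n,x'_n].$$
   Context: $R$ is a unique factorization domain containing $\mathbb{Z}$ and $\mathcal{F}$ is the field of rational functions in $n$ variables over $\mathrm{Frac}(R)$; all rings are subrings of $\mathcal{F}$. An LP seed of rank $n$ is a pair $(\mathbf{x},\mathbf{F})$ where $\mathbf{x}=\{x_1,\dots,x_n\}$ is a transcendence basis of $\mathcal{F}$ over $\mathrm{Frac}(R)$ and $\mathbf{F}=\{F_1,\dots,F_n\}$ are irreducible polynomials in $R[x_1,\dots,x_n]$ with $x_j\nmid F_i$ for all $i,j$ and $F_i$ not involving $x_i$. The exchange Laurent polynomial is $\hat F_j=F_j/\prod_{k\neq j}x_k^{a_k}$, with $a_k\in\mathbb{Z}_{\ge0}$ maximal such that $F_k^{a_k}$ divides $F_j|_{x_k\leftarrow F_k/x'_k}$ in $R[x_1,\dots,x_{k-1},(x'_k)^{-1},x_{k+1},\dots,x_n]$. Set $x'_j=\hat F_j/x_j$. Lexicographic order on $\mathbb{Z}^n$: $\mathbf{a}\prec\mathbf{a}'$ if the first nonzero entry of $\mathbf{a}'-\mathbf{a}$ is positive; the lexicographically first monomial of a polynomial is its term with $\prec$-smallest exponent vector. Condition 1.2: for every $k\in[1,n]$, with $M_k$ the lexicographically first monomial of $F_k$: (i) $\hat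 F_k=F_k$; (ii) $M_k=x_{k+1}^{v_{k+1,k}}\cdots x_n^{v_{n,k}}$ (coefficient $1$) with $v_{\cdot,k}\in\mathbb{Z}_{\ge0}$ for $k\in[1,n-1]$, and $M_n=1$; (iii) if $k\ne1$ and $F_k$ involves $x_1$, then every monomial of $F_k-M_k$ is divisible by $x_1$; (iv) if $k\notin\{1,2\}$, $F_k$ does not involve $x_1$, and there is $i\in[2,k-1]$ such that $x_k$ divides $M_i$, then every monomial of $F_k-M_k$ is divisible by $x_i$. *)

theory Defs
  imports "HOL-Library.Poly_Mapping" "HOL-Computational_Algebra.Factorial_Ring"
begin

text \<open>Laurent polynomials in the variables x_1, x_2, ... over the coefficient ring 'a.
  A monomial is an exponent vector  exponent vector; variable i has exponent Poly_Mapping.lookup m i.\<close>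
type_synonym 'a lpoly = "(nat \<Rightarrow>\<^sub>0 int) \<Rightarrow>\<^sub>0 'a"

definition const :: "'a::zero \<Rightarrow> 'a lpoly" where
  "const c = Poly_Mapping.single 0 c"

definition monom :: "(nat \<Rightarrow>\<^sub>0 int) \<Rightarrow> 'a::{zero,one} lpoly" where
  "monom m = Poly_Mapping.single m 1"

definition X :: "nat \<Rightarrow> 'a::{zero,one} lpoly" where
  "X i = monom (Poly_Mapping.single i 1)"

definition Xinv :: "nat \<Rightarrow> 'a::{zero,one} lpoly" where
  "Xinv i = monom (Poly_Mapping.single i (-1))"

definition in_vars :: "nat \<Rightarrow> (nat \<Rightarrow>\<^sub>0 int) \<Rightarrow> bool" where
  "in_vars n m \<longleftrightarrow> Poly_Mapping.keys m \<subseteq> {1..n}"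

definition polyring :: "nat \<Rightarrow> 'a::zero lpoly set" where
  "polyring n = {P. \<forall>m\<in>Poly_Mapping.keys P. in_vars n m \<and> (\<forall>i. Poly_Mapping.lookup m i \<ge> 0)}"

text \<open>The ring R[x_1,..,x_{k-1},(x'_k)^{-1},x_{k+1},..,x_n]; the variable x'_k
  is represented at position k.\<close>
definition subst_ring :: "nat \<Rightarrow> nat \<Rightarrow> 'a::zero lpoly set" where
  "subst_ring n k = {P. \<forall>m\<in>Poly_Mapping.keys P. in_vars n m \<and> (\<forall>i. i \<noteq> k \<longrightarrow> Poly_Mapping.lookup m i \<ge> 0)
                         \<and> Poly_Mapping.lookup m k \<le> 0}"

text \<open>P |_{x_k \<leftarrow> G / x'_k} for a polynomial P (x'_k at position k)\<close>
definition subst :: "nat \<Rightarrow> 'a::comm_ring_1 lpoly \<Rightarrow> 'a lpoly \<Rightarrow> 'a lpoly" where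
  "subst k G P = (\<Sum>m\<in>Poly_Mapping.keys P.
      Poly_Mapping.single (Poly_Mapping.update k (- Poly_Mapping.lookup m k) m) (Poly_Mapping.lookup P m)
        * G ^ nat (Poly_Mapping.lookup m k))"

definition dvd_in :: "'a::times set \<Rightarrow> 'a \<Rightarrow> 'a \<Rightarrow> bool" where
  "dvd_in S a b \<longleftrightarrow> (\<exists>c\<in>S. b = a * c)"

definition unit_in :: "'a::{times,one} set \<Rightarrow> 'a \<Rightarrow> bool" where
  "unit_in S a \<longleftrightarrow> (\<exists>c\<in>S. a * c = 1)"

definition irreducible_in :: "'a::{comm_monoid_mult,zero} set \<Rightarrow> 'a \<Rightarrow> bool" where
  "irreducible_in S p \<longleftrightarrow> p \<in> S \<and> p \<noteq> 0 \<and> \<not> unit_in S p \<and>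
     (\<forall>a\<in>S. \<forall>b\<in>S. p = a * b \<longrightarrow> unit_in S a \<or> unit_in S b)"

definition involves :: "'a::zero lpoly \<Rightarrow> nat \<Rightarrow> bool" where
  "involves P i \<longleftrightarrow> (\<exists>m\<in>Poly_Mapping.keys P. Poly_Mapping.lookup m i \<noteq> 0)"

definition exch_exp :: "nat \<Rightarrow> (nat \<Rightarrow> 'a::comm_ring_1 lpoly) \<Rightarrow> nat \<Rightarrow> nat \<Rightarrow> nat" where
  "exch_exp n F j k = (GREATEST a. dvd_in (subst_ring n k) (F k ^ a) (subst k (F k) (F j)))"

definition hatF :: "nat \<Rightarrow> (nat \<Rightarrow> 'a::comm_ring_1 lpoly) \<Rightarrow> nat \<Rightarrow> 'a lpoly" where
  "hatF n F j = F j * monom (\<Sum>k\<in>{1..n} - {j}. Poly_Mapping.single k (- int (exch_exp n F j k)))"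

definition xprime :: "nat \<Rightarrow> (nat \<Rightarrow> 'a::comm_ring_1 lpoly) \<Rightarrow> nat \<Rightarrow> 'a lpoly" where
  "xprime n F j = hatF n F j * Xinv j"

definition LP_seed :: "nat \<Rightarrow> (nat \<Rightarrow> 'a::comm_ring_1 lpoly) \<Rightarrow> bool" where
  "LP_seed n F \<longleftrightarrow> (\<forall>i\<in>{1..n}. irreducible_in (polyring n) (F i) \<and> \<not> involves (F i) i \<and>
      (\<forall>j\<in>{1..n}. \<not> dvd_in (polyring n) (X j) (F i)))"

definition lex_less :: "nat \<Rightarrow> (nat \<Rightarrow>\<^sub>0 int) \<Rightarrow> (nat \<Rightarrow>\<^sub>0 int) \<Rightarrow> bool" where
  "lex_less n a b \<longleftrightarrow> (\<exists>i\<in>{1..n}. (\<forall>j\<in>{1..<i}. Poly_Mapping.lookup a j = Poly_Mapping.lookup b j) \<and> Poly_Mapping.lookup a i < Poly_Mapping.lookup b i)"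

definition lex_first_exp :: "nat \<Rightarrow> 'a::zero lpoly \<Rightarrow> nat \<Rightarrow>\<^sub>0 int" where
  "lex_first_exp n P = (THE m. m \<in> Poly_Mapping.keys P \<and> (\<forall>m'\<in>Poly_Mapping.keys P. m' \<noteq> m \<longrightarrow> lex_less n m m'))"

definition lex_first :: "nat \<Rightarrow> 'a::zero lpoly \<Rightarrow> 'a lpoly" where
  "lex_first n P = Poly_Mapping.single (lex_first_exp n P) (Poly_Mapping.lookup P (lex_first_exp n P))"

definition condition_1_2 :: "nat \<Rightarrow> (nat \<Rightarrow> 'a::comm_ring_1 lpoly) \<Rightarrow> bool" where
  "condition_1_2 n F \<longleftrightarrow> (\<forall>k\<in>{1..n}.
     hatF n F k = F k \<and>
     Poly_Mapping.lookup (F k) (lex_first_exp n (F k)) = 1 \<and>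
     (\<forall>i\<in>{1..k}. Poly_Mapping.lookup (lex_first_exp n (F k)) i = 0) \<and>
     (k \<noteq> 1 \<and> involves (F k) 1 \<longrightarrow>
        (\<forall>m\<in>Poly_Mapping.keys (F k - lex_first n (F k)). Poly_Mapping.lookup m 1 \<ge> 1)) \<and>
     (k \<notin> {1,2} \<and> \<not> involves (F k) 1 \<longrightarrow>
        (\<forall>i\<in>{2..k-1}. Poly_Mapping.lookup (lex_first_exp n (F i)) k \<ge> 1 \<longrightarrow>
           (\<forall>m\<in>Poly_Mapping.keys (F k - lex_first n (F k)). Poly_Mapping.lookup m i \<ge> 1))))"

inductive_set ring_gen :: "'a::comm_ring_1 lpoly set \<Rightarrow> 'a lpoly set" for G where
  const: "const c \<in> ring_gen G"
| gen: "g \<in> G \<Longrightarrow> g \<in> ring_gen G"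
| add: "p \<in> ring_gen G \<Longrightarrow> q \<in> ring_gen G \<Longrightarrow> p + q \<in> ring_gen G"
| mult: "p \<in> ring_gen G \<Longrightarrow> q \<in> ring_gen G \<Longrightarrow> p * q \<in> ring_gen G"
| neg: "p \<in> ring_gen G \<Longrightarrow> - p \<in> ring_gen G"

end

theory Submission
  imports Defs
begin


lemma pm_expand: "(p::('b \<Rightarrow>\<^sub>0 'c::comm_monoid_add)) = (\<Sum>m\<in>Poly_Mapping.keys p. Poly_Mapping.single m (Poly_Mapping.lookup p m))"
proof (rule poly_mapping_eqI)
  fix k
  show "Poly_Mapping.lookup p k = Poly_Mapping.lookup (\<Sum>m\<in>Poly_Mapping.keys p. Poly_Mapping.single m (Poly_Mapping.lookup p m)) k"
    by (cases "k \<in> Poly_Mapping.keys p") (auto simp: lookup_sum lookup_single when_def in_keys_iff)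
qed

lemma lookup_mult_fin:
  "Poly_Mapping.lookup ((p::('b::monoid_add \<Rightarrow>\<^sub>0 'c::comm_semiring_1)) * q) k =
    (\<Sum>a\<in>Poly_Mapping.keys p. \<Sum>b\<in>Poly_Mapping.keys q. if a + b = k then Poly_Mapping.lookup p a * Poly_Mapping.lookup q b else 0)"
proof -
  have "p * q = (\<Sum>a\<in>Poly_Mapping.keys p. Poly_Mapping.single a (Poly_Mapping.lookup p a)) * (\<Sum>b\<in>Poly_Mapping.keys q. Poly_Mapping.single b (Poly_Mapping.lookup q b))"
    using pm_expand[of p] pm_expand[of q] by simp
  also have "\<dots> = (\<Sum>a\<in>Poly_Mapping.keys p. \<Sum>b\<in>Poly_Mapping.keys q. Poly_Mapping.single (a+b) (Poly_Mapping.lookup p a * Poly_Mapping.lookup q b))"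
    by (simp add: sum_distrib_left sum_distrib_right mult_single sum.swap[where A="Poly_Mapping.keys q"])
  finally show ?thesis by (simp add: lookup_sum lookup_single when_def)
qed

lemma lookup_const_mult: "Poly_Mapping.lookup (const c * (p::'a::comm_ring_1 lpoly)) k = c * Poly_Mapping.lookup p k"
  unfolding const_def lookup_mult_fin
  by (cases "k \<in> Poly_Mapping.keys p") (auto simp: sum.If_cases in_keys_iff Int_absorb1)

lemma lex_irrefl: "\<not> lex_less n a a"
  unfolding lex_less_def by auto

lemma lex_trans: assumes "lex_less n a b" "lex_less n b c" shows "lex_less n a c"
proof -
  obtain i where i: "i \<in> {1..n}" "\<forall>j\<in>{1..<i}. Poly_Mapping.lookup a j = Poly_Mapping.lookup b j" "Poly_Mapping.lookup a i < Poly_Mapping.lookup b i"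
    using assms(1) unfolding lex_less_def by blast
  obtain k where k: "k \<in> {1..n}" "\<forall>j\<in>{1..<k}. Poly_Mapping.lookup b j = Poly_Mapping.lookup c j" "Poly_Mapping.lookup b k < Poly_Mapping.lookup c k"
    using assms(2) unfolding lex_less_def by blast
  show ?thesis unfolding lex_less_def
  proof (cases i k rule: linorder_cases)
    case less
    then show "\<exists>i\<in>{1..n}. (\<forall>j\<in>{1..<i}. Poly_Mapping.lookup a j = Poly_Mapping.lookup c j) \<and> Poly_Mapping.lookup a i < Poly_Mapping.lookup c i"
      using i k by (intro bexI[of _ i]) auto
  next
    case equal
    then show "\<exists>i\<in>{1..n}. (\<forall>j\<in>{1..<i}. Poly_Mapping.lookup a j = Poly_Mapping.lookup c j) \<and> Poly_Mapping.lookup a i < Poly_Mapping.lookup c i"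
      using i k by (intro bexI[of _ i]) auto
  next
    case greater
    then show "\<exists>i\<in>{1..n}. (\<forall>j\<in>{1..<i}. Poly_Mapping.lookup a j = Poly_Mapping.lookup c j) \<and> Poly_Mapping.lookup a i < Poly_Mapping.lookup c i"
      using i k by (intro bexI[of _ k]) auto
  qed
qed

lemma lex_asym: "lex_less n a b \<Longrightarrow> \<not> lex_less n b a"
  using lex_trans[of n a b a] lex_irrefl[of n a] by blast

lemma lex_add: assumes "lex_less n a b" shows "lex_less n (a + c) (b + c)"
proof -
  obtain i where i: "i \<in> {1..n}" "\<forall>j\<in>{1..<i}. Poly_Mapping.lookup a j = Poly_Mapping.lookup b j" "Poly_Mapping.lookup a i < Poly_Mapping.lookup b i"
    using assms unfolding lex_less_def by blast
  show ?thesis unfolding lex_less_def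
    by (rule bexI[of _ i]) (use i in \<open>simp_all add: lookup_add\<close>)
qed

lemma lex_add2: "lex_less n a b \<Longrightarrow> c = d \<or> lex_less n c d \<Longrightarrow> lex_less n (a + c) (b + d)"
proof -
  assume ab: "lex_less n a b" and cd: "c = d \<or> lex_less n c d"
  have 1: "lex_less n (a + c) (b + c)" using lex_add[OF ab] .
  show ?thesis
  proof (cases "c = d")
    case True then show ?thesis using 1 by simp
  next
    case False
    then have "lex_less n (c + b) (d + b)" using cd lex_add by blast
    then have "lex_less n (b + c) (b + d)" by (simp add: add.commute)
    then show ?thesis using 1 lex_trans by blast
  qed
qed

lemma lex_total:
  assumes "in_vars n a" "in_vars n b" "a \<noteq> b"
  shows "lex_less n a b \<or> lex_less n b a"
proof -
  have ex: "\<exists>i. Poly_Mapping.lookup a i \<noteq> Poly_Mapping.lookup b i"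
  proof (rule ccontr)
    assume "\<not> (\<exists>i. Poly_Mapping.lookup a i \<noteq> Poly_Mapping.lookup b i)"
    then have "a = b" by (intro poly_mapping_eqI) simp
    then show False using assms(3) by simp
  qed
  define i where "i = (LEAST i. Poly_Mapping.lookup a i \<noteq> Poly_Mapping.lookup b i)"
  have ne: "Poly_Mapping.lookup a i \<noteq> Poly_Mapping.lookup b i"
    unfolding i_def using ex by (rule LeastI_ex)
  have lt: "\<And>j. j < i \<Longrightarrow> Poly_Mapping.lookup a j = Poly_Mapping.lookup b j"
    unfolding i_def by (rule not_less_Least[of _ "\<lambda>i. Poly_Mapping.lookup a i \<noteq> Poly_Mapping.lookup b i", simplified])
  have "i \<in> Poly_Mapping.keys a \<union> Poly_Mapping.keys b"
    using ne by (auto simp: in_keys_iff)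
  then have iin: "i \<in> {1..n}" using assms(1,2) unfolding in_vars_def by blast
  have lt': "\<forall>j\<in>{1..<i}. Poly_Mapping.lookup a j = Poly_Mapping.lookup b j"
    using lt by simp
  have lt'': "\<forall>j\<in>{1..<i}. Poly_Mapping.lookup b j = Poly_Mapping.lookup a j"
    using lt by simp
  show ?thesis
  proof (cases "Poly_Mapping.lookup a i < Poly_Mapping.lookup b i")
    case True
    then have "lex_less n a b" unfolding lex_less_def using iin lt' by blast
    then show ?thesis ..
  next
    case False
    then have "Poly_Mapping.lookup b i < Poly_Mapping.lookup a i" using ne by simp
    then have "lex_less n b a" unfolding lex_less_def using iin lt'' by blast
    then show ?thesis ..
  qed
qed

lemma lex_min:
  assumes "finite S" "S \<noteq> {}" "\<forall>s\<in>S. in_vars n s"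
  shows "\<exists>m\<in>S. \<forall>m'\<in>S. m' \<noteq> m \<longrightarrow> lex_less n m m'"
  using assms
proof (induction S rule: finite_ne_induct)
  case (singleton x)
  then show ?case by auto
next
  case (insert x F)
  then obtain m where m: "m \<in> F" "\<forall>m'\<in>F. m' \<noteq> m \<longrightarrow> lex_less n m m'" by auto
  show ?case
  proof (cases "lex_less n x m")
    case True
    have "\<forall>m'\<in>insert x F. m' \<noteq> x \<longrightarrow> lex_less n x m'"
    proof (intro ballI impI)
      fix m' assume "m' \<in> insert x F" "m' \<noteq> x"
      then have "m' \<in> F" by simp
      then show "lex_less n x m'"
        using m(2) True lex_trans[of n x m m'] by (cases "m' = m") auto
    qed
    then show ?thesis by blast
  next
    case False
    have "x \<noteq> m" using m insert.hyps(3) by auto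
    then have "lex_less n m x" using False lex_total insert.prems m(1) by blast
    then show ?thesis using m by (intro bexI[of _ m]) auto
  qed
qed

definition lead :: "nat \<Rightarrow> 'a::zero lpoly \<Rightarrow> (nat \<Rightarrow>\<^sub>0 int) \<Rightarrow> 'a \<Rightarrow> bool" where
  "lead n p e c \<longleftrightarrow> Poly_Mapping.lookup p e = c \<and> c \<noteq> 0 \<and> (\<forall>m\<in>Poly_Mapping.keys p. m \<noteq> e \<longrightarrow> lex_less n e m)"

lemma lead_mult:
  fixes p q :: "'a::comm_ring_1 lpoly"
  assumes p: "lead n p e a" and q: "lead n q f b" and ab: "a * b \<noteq> 0"
  shows "lead n (p * q) (e + f) (a * b)"
proof -
  have key: "\<And>a' b'. a' \<in> Poly_Mapping.keys p \<Longrightarrow> b' \<in> Poly_Mapping.keys q \<Longrightarrow> (a', b') \<noteq> (e, f) \<Longrightarrow> lex_less n (e + f) (a' + b')"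
  proof -
    fix a' b' assume a': "a' \<in> Poly_Mapping.keys p" and b': "b' \<in> Poly_Mapping.keys q" and ne: "(a', b') \<noteq> (e, f)"
    have fb: "f = b' \<or> lex_less n f b'" using q b' unfolding lead_def by auto
    show "lex_less n (e + f) (a' + b')"
    proof (cases "a' = e")
      case True
      then have "lex_less n f b'" using ne fb by auto
      then have "lex_less n (f + e) (b' + e)" by (rule lex_add)
      then show ?thesis using True by (simp add: add.commute)
    next
      case False
      then have "lex_less n e a'" using p a' unfolding lead_def by auto
      then show ?thesis using lex_add2 fb by blast
    qed
  qed
  have eK: "e \<in> Poly_Mapping.keys p" and fK: "f \<in> Poly_Mapping.keys q"
    using p q unfolding lead_def by (auto simp: in_keys_iff)
  have "Poly_Mapping.lookup (p * q) (e + f) =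
    (\<Sum>a'\<in>Poly_Mapping.keys p. \<Sum>b'\<in>Poly_Mapping.keys q. if a' = e \<and> b' = f then Poly_Mapping.lookup p a' * Poly_Mapping.lookup q b' else 0)"
    unfolding lookup_mult_fin
    apply (intro sum.cong refl)
    subgoal for a' b'
      using key[of a' b'] lex_irrefl[of n "e+f"] by auto
    done
  also have "\<dots> = Poly_Mapping.lookup p e * Poly_Mapping.lookup q f"
  proof -
    have "\<And>a'. (\<Sum>b'\<in>Poly_Mapping.keys q. if a' = e \<and> b' = f then Poly_Mapping.lookup p a' * Poly_Mapping.lookup q b' else 0)
       = (if a' = e then Poly_Mapping.lookup p e * Poly_Mapping.lookup q f else 0)"
      using fK by (auto simp: sum.delta')
    then show ?thesis using eK by (simp add: sum.delta')
  qed
  finally have lk: "Poly_Mapping.lookup (p * q) (e + f) = a * b" using p q unfolding lead_def by simp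
  have "\<forall>m\<in>Poly_Mapping.keys (p * q). m \<noteq> e + f \<longrightarrow> lex_less n (e + f) m"
    using keys_mult[of p q] key by fastforce
  then show ?thesis using lk ab unfolding lead_def by simp
qed

lemma lead_single: "c \<noteq> 0 \<Longrightarrow> lead n (Poly_Mapping.single e c) e c"
  unfolding lead_def by auto

lemma lead_one: "lead n (1::'a::comm_ring_1 lpoly) 0 1"
  unfolding lead_def by (auto simp: lookup_one)

lemma lead_power:
  fixes p :: "'a::comm_ring_1 lpoly"
  assumes "lead n p e 1"
  shows "lead n (p ^ k) (\<Sum>t<k. e) 1"
proof (induction k)
  case 0 then show ?case using lead_one by simp
next
  case (Suc k)
  have "lead n (p * p ^ k) (e + (\<Sum>t<k. e)) (1 * 1)"
    by (rule lead_mult[OF assms Suc]) simp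
  moreover have "(\<Sum>t<Suc k. e) = e + (\<Sum>t<k. e)" by (simp only: sum.lessThan_Suc add.commute)
  ultimately show ?case by (simp only: power_Suc mult_1)
qed

lemma lead_prod:
  fixes f :: "nat \<Rightarrow> 'a::comm_ring_1 lpoly"
  assumes "finite I" "\<forall>i\<in>I. lead n (f i) (e i) 1"
  shows "lead n (\<Prod>i\<in>I. f i) (\<Sum>i\<in>I. e i) 1"
  using assms
proof (induction I rule: finite_induct)
  case empty then show ?case using lead_one by simp
next
  case (insert x F)
  have "lead n (f x * (\<Prod>i\<in>F. f i)) (e x + (\<Sum>i\<in>F. e i)) (1 * 1)"
    using insert by (intro lead_mult) auto
  then show ?case using insert by simp
qed



lemma monom_add: "monom a * monom b = (monom (a + b) :: 'a::comm_ring_1 lpoly)"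
  by (simp add: monom_def mult_single)

lemma monom_zero: "monom 0 = (1 :: 'a::comm_ring_1 lpoly)"
  by (simp add: monom_def)

lemma const_one: "const 1 = (1 :: 'a::comm_ring_1 lpoly)"
  by (simp add: const_def)

lemma const_zero: "const 0 = (0 :: 'a::comm_ring_1 lpoly)"
  by (simp add: const_def)

lemma const_add: "const (a + b) = (const a + const b :: 'a::comm_ring_1 lpoly)"
  by (simp add: const_def single_add)

lemma const_mult: "const a * const b = (const (a * b) :: 'a::comm_ring_1 lpoly)"
  by (simp add: const_def mult_single)

lemma single_const_monom: "Poly_Mapping.single m a = (const a * monom m :: 'a::comm_ring_1 lpoly)"
  by (simp add: const_def monom_def mult_single)

lemma X_pow: "X i ^ k = (monom (Poly_Mapping.single i (int k)) :: 'a::comm_ring_1 lpoly)"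
proof (induction k)
  case 0 then show ?case by (simp add: monom_zero)
next
  case (Suc k)
  then show ?case by (simp add: X_def monom_add single_add[symmetric] add.commute)
qed

lemma Xinv_pow: "Xinv i ^ k = (monom (Poly_Mapping.single i (- int k)) :: 'a::comm_ring_1 lpoly)"
proof (induction k)
  case 0 then show ?case by (simp add: monom_zero)
next
  case (Suc k)
  then show ?case by (simp add: Xinv_def monom_add single_add[symmetric] add.commute)
qed

lemma Xinv_X: "Xinv i * X i = (1 :: 'a::comm_ring_1 lpoly)"
  by (simp add: Xinv_def X_def monom_add single_add[symmetric] monom_zero)

lemma monom_prod: "(\<Prod>i\<in>I. monom (f i)) = (monom (\<Sum>i\<in>I. f i) :: 'a::comm_ring_1 lpoly)"
proof (cases "finite I")
  case True
  then show ?thesis by (induction I rule: finite_induct) (simp_all add: monom_zero monom_add)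
next
  case False
  then show ?thesis by (simp add: monom_zero)
qed

lemma rg_zero: "0 \<in> ring_gen G"
  using ring_gen.const[of 0 G] by (simp add: const_zero)

lemma rg_one: "1 \<in> ring_gen G"
  using ring_gen.const[of 1 G] by (simp add: const_one)

lemma rg_diff: "p \<in> ring_gen G \<Longrightarrow> q \<in> ring_gen G \<Longrightarrow> p - q \<in> ring_gen G"
  unfolding diff_conv_add_uminus by (intro ring_gen.add ring_gen.neg)

lemma rg_power: "p \<in> ring_gen G \<Longrightarrow> p ^ k \<in> ring_gen G"
proof (induction k)
  case 0 then show ?case by (simp add: rg_one)
next
  case (Suc k) then show ?case unfolding power_Suc by (intro ring_gen.mult)
qed

lemma rg_prod: "(\<And>i. i \<in> I \<Longrightarrow> f i \<in> ring_gen G) \<Longrightarrow> (\<Prod>i\<in>I. f i) \<in> ring_gen G"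
proof (induction I rule: infinite_finite_induct)
  case (infinite A) then show ?case by (simp add: rg_one)
next
  case empty then show ?case by (simp add: rg_one)
next
  case (insert x F)
  then have "f x * (\<Prod>i\<in>F. f i) \<in> ring_gen G" by (intro ring_gen.mult) auto
  then show ?case using insert by simp
qed

lemma rg_sum: "(\<And>i. i \<in> I \<Longrightarrow> f i \<in> ring_gen G) \<Longrightarrow> (\<Sum>i\<in>I. f i) \<in> ring_gen G"
proof (induction I rule: infinite_finite_induct)
  case (infinite A) then show ?case by (simp add: rg_zero)
next
  case empty then show ?case by (simp add: rg_zero)
next
  case (insert x F)
  then have "f x + (\<Sum>i\<in>F. f i) \<in> ring_gen G" by (intro ring_gen.add) auto
  then show ?case using insert by simp
qed

lemma rg_mono: assumes "G \<subseteq> ring_gen G'" shows "ring_gen G \<subseteq> ring_gen G'"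
proof
  fix p assume "p \<in> ring_gen G"
  then show "p \<in> ring_gen G'"
  proof (induction rule: ring_gen.induct)
    case (const c) then show ?case by (rule ring_gen.const)
  next
    case (gen g) then show ?case using assms by blast
  next
    case (add p q) from add.IH show ?case by (rule ring_gen.add)
  next
    case (mult p q) from mult.IH show ?case by (rule ring_gen.mult)
  next
    case (neg p) from neg.IH show ?case by (rule ring_gen.neg)
  qed
qed

lemma monom_poly:
  assumes "Poly_Mapping.keys m \<subseteq> {1..n}" "\<forall>i. Poly_Mapping.lookup m i \<ge> 0"
  shows "monom m = (\<Prod>j\<in>{1..n}. X j ^ nat (Poly_Mapping.lookup m j) :: 'a::comm_ring_1 lpoly)"
proof -
  have "m = (\<Sum>j\<in>{1..n}. Poly_Mapping.single j (int (nat (Poly_Mapping.lookup m j))))"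
  proof (rule poly_mapping_eqI)
    fix k
    show "Poly_Mapping.lookup m k = Poly_Mapping.lookup (\<Sum>j\<in>{1..n}. Poly_Mapping.single j (int (nat (Poly_Mapping.lookup m j)))) k"
    proof (cases "k \<in> {1..n}")
      case True
      then show ?thesis using assms(2)[rule_format, of k] by (simp add: lookup_sum lookup_single when_def)
    next
      case False
      then have "Poly_Mapping.lookup m k = 0" using assms(1) by (auto simp: in_keys_iff)
      then show ?thesis using False by (auto simp: lookup_sum lookup_single when_def)
    qed
  qed
  then have "(monom m :: 'a lpoly) = monom (\<Sum>j\<in>{1..n}. Poly_Mapping.single j (int (nat (Poly_Mapping.lookup m j))))" by simp
  also have "\<dots> = (\<Prod>j\<in>{1..n}. X j ^ nat (Poly_Mapping.lookup m j))"
    unfolding X_pow monom_prod by (rule refl)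
  finally show ?thesis .
qed

lemma poly_in_rg:
  assumes "\<forall>j\<in>{1..n}. X j \<in> ring_gen G" "P \<in> polyring n"
  shows "P \<in> ring_gen G"
proof -
  have "P = (\<Sum>m\<in>Poly_Mapping.keys P. const (Poly_Mapping.lookup P m) * monom m)"
    using pm_expand[of P] by (simp add: single_const_monom)
  also have "\<dots> \<in> ring_gen G"
  proof (rule rg_sum)
    fix m assume m: "m \<in> Poly_Mapping.keys P"
    then have "Poly_Mapping.keys m \<subseteq> {1..n}" "\<forall>i. Poly_Mapping.lookup m i \<ge> 0"
      using assms(2) unfolding polyring_def in_vars_def by auto
    then have "monom m = (\<Prod>j\<in>{1..n}. X j ^ nat (Poly_Mapping.lookup m j) :: 'a lpoly)" by (rule monom_poly)
    also have "\<dots> \<in> ring_gen G" using assms(1) by (intro rg_prod rg_power) auto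
    finally show "const (Poly_Mapping.lookup P m) * monom m \<in> ring_gen G"
      by (intro ring_gen.mult ring_gen.const)
  qed
  finally show ?thesis .
qed

definition nonneg1 :: "'a::zero lpoly \<Rightarrow> bool" where
  "nonneg1 p \<longleftrightarrow> (\<forall>m\<in>Poly_Mapping.keys p. Poly_Mapping.lookup m 1 \<ge> 0)"

lemma nonneg1_mult: "nonneg1 p \<Longrightarrow> nonneg1 q \<Longrightarrow> nonneg1 (p * (q::'a::comm_ring_1 lpoly))"
proof -
  assume p: "nonneg1 p" and q: "nonneg1 q"
  show ?thesis unfolding nonneg1_def
  proof
    fix m assume "m \<in> Poly_Mapping.keys (p * q)"
    then obtain a b where "m = a + b" "a \<in> Poly_Mapping.keys p" "b \<in> Poly_Mapping.keys q"
      using keys_mult[of p q] by blast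
    then show "0 \<le> Poly_Mapping.lookup m 1" using p q unfolding nonneg1_def by (simp add: lookup_add)
  qed
qed

lemma rg_nonneg1:
  assumes "\<forall>g\<in>G. nonneg1 g" "p \<in> ring_gen G"
  shows "nonneg1 p"
  using assms(2)
proof (induction rule: ring_gen.induct)
  case (const c) then show ?case by (simp add: nonneg1_def const_def)
next
  case (gen g) then show ?case using assms(1) by simp
next
  case (add p q) then show ?case unfolding nonneg1_def using keys_add[of p q] by blast
next
  case (mult p q) from mult.IH show ?case by (rule nonneg1_mult)
next
  case (neg p) then show ?case by (simp add: nonneg1_def)
qed



locale LPsetup =
  fixes n :: nat and F :: "nat \<Rightarrow> 'a::comm_ring_1 lpoly" and v :: "nat \<Rightarrow> (nat \<Rightarrow>\<^sub>0 int)"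
  assumes n2: "n \<ge> 2"
  and Fpoly: "\<And>i. i \<in> {2..n} \<Longrightarrow> F i \<in> polyring n"
  and Flead: "\<And>i. i \<in> {2..n} \<Longrightarrow> lead n (F i) (v i) 1"
  and vzero: "\<And>i j. i \<in> {2..n} \<Longrightarrow> j \<in> {1..i} \<Longrightarrow> Poly_Mapping.lookup (v i) j = 0"
  and vvars: "\<And>i. i \<in> {2..n} \<Longrightarrow> in_vars n (v i)"
  and xp: "\<And>i. i \<in> {2..n} \<Longrightarrow> xprime n F i = F i * Xinv i"
begin

definition expo :: "(nat \<Rightarrow> nat) \<Rightarrow> (nat \<Rightarrow> nat) \<Rightarrow> (nat \<Rightarrow>\<^sub>0 int)" where
  "expo c d = (\<Sum>i\<in>{2..n}. Poly_Mapping.single i (int (c i) - int (d i)))"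

definition Fprod :: "(nat \<Rightarrow> nat) \<Rightarrow> 'a lpoly" where
  "Fprod d = (\<Prod>i\<in>{2..n}. F i ^ d i)"

definition mon :: "(nat \<Rightarrow> nat) \<Rightarrow> (nat \<Rightarrow> nat) \<Rightarrow> 'a lpoly" where
  "mon c d = monom (expo c d) * Fprod d"

definition Eexp :: "(nat \<Rightarrow> nat) \<Rightarrow> (nat \<Rightarrow> nat) \<Rightarrow> (nat \<Rightarrow>\<^sub>0 int)" where
  "Eexp c d = expo c d + (\<Sum>i\<in>{2..n}. \<Sum>t<d i. v i)"

definition Norm :: "((nat \<Rightarrow> nat) \<times> (nat \<Rightarrow> nat)) set" where
  "Norm = {(c, d). (\<forall>i. c i = 0 \<or> d i = 0) \<and> (\<forall>i. i \<notin> {2..n} \<longrightarrow> c i = 0 \<and> d i = 0)}"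

definition GC :: "'a lpoly set" where
  "GC = {X 1} \<union> (\<Union>i\<in>{2..n}. {X i, xprime n F i})"

abbreviation CC where "CC \<equiv> ring_gen GC"

lemma mon_eq: "mon c d = (\<Prod>i\<in>{2..n}. X i ^ c i * (F i * Xinv i) ^ d i)"
proof -
  have "(\<Prod>i\<in>{2..n}. X i ^ c i * (F i * Xinv i) ^ d i) = (\<Prod>i\<in>{2..n}. (X i ^ c i * Xinv i ^ d i) * F i ^ d i)"
    by (simp add: power_mult_distrib mult_ac)
  also have "\<dots> = (\<Prod>i\<in>{2..n}. X i ^ c i * Xinv i ^ d i) * Fprod d"
    by (simp add: prod.distrib Fprod_def)
  also have "(\<Prod>i\<in>{2..n}. X i ^ c i * Xinv i ^ d i) = (\<Prod>i\<in>{2..n}. monom (Poly_Mapping.single i (int (c i) - int (d i))) :: 'a lpoly)"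
    by (simp add: X_pow Xinv_pow monom_add single_add[symmetric])
  also have "\<dots> = monom (expo c d)" by (simp add: monom_prod expo_def)
  finally show ?thesis by (simp add: mon_def)
qed

lemma Xxp_in: "i \<in> {2..n} \<Longrightarrow> X i \<in> CC" "i \<in> {2..n} \<Longrightarrow> F i * Xinv i \<in> CC" "X 1 \<in> CC"
proof -
  show "i \<in> {2..n} \<Longrightarrow> X i \<in> CC" by (rule ring_gen.gen) (auto simp: GC_def)
  show "i \<in> {2..n} \<Longrightarrow> F i * Xinv i \<in> CC"
  proof -
    assume i: "i \<in> {2..n}"
    have "xprime n F i \<in> CC" using i by (intro ring_gen.gen) (auto simp: GC_def)
    then show ?thesis using xp[OF i] by simp
  qed
  show "X 1 \<in> CC" by (rule ring_gen.gen) (auto simp: GC_def)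
qed

lemma mon_in: "mon c d \<in> CC"
  unfolding mon_eq
proof (rule rg_prod)
  fix i assume i: "i \<in> {2..n}"
  show "X i ^ c i * (F i * Xinv i) ^ d i \<in> CC"
    by (rule ring_gen.mult; rule rg_power) (use Xxp_in i in auto)
qed

lemma mon_mult: "mon c d * mon c' d' = mon (\<lambda>i. c i + c' i) (\<lambda>i. d i + d' i)"
  unfolding mon_eq prod.distrib[symmetric] by (simp add: power_add mult_ac)

lemma mon_zero: "mon (\<lambda>_. 0) (\<lambda>_. 0) = 1"
  unfolding mon_eq by simp

lemma mon_cong: "(\<And>i. i \<in> {2..n} \<Longrightarrow> c i = c' i \<and> d i = d' i) \<Longrightarrow> mon c d = mon c' d'"
  unfolding mon_eq by (intro prod.cong) auto

lemma mon_step: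
  assumes i: "i \<in> {2..n}" and "c i > 0" "d i > 0"
  shows "mon c d = F i * mon (c(i := c i - 1)) (d(i := d i - 1))"
proof -
  have e: "expo c d = expo (c(i := c i - 1)) (d(i := d i - 1))"
    unfolding expo_def using assms by (intro sum.cong) auto
  have "Fprod d = F i ^ d i * (\<Prod>j\<in>{2..n} - {i}. F j ^ d j)"
    unfolding Fprod_def using i by (simp add: prod.remove)
  also have "\<dots> = F i * (F i ^ (d i - 1) * (\<Prod>j\<in>{2..n} - {i}. F j ^ (d(i := d i - 1)) j))"
    using assms by (cases "d i") simp_all
  also have "\<dots> = F i * Fprod (d(i := d i - 1))"
    unfolding Fprod_def using i by (simp add: prod.remove)
  finally show ?thesis unfolding mon_def e by (simp add: mult_ac)
qed

lemma mon_X: "i \<in> {2..n} \<Longrightarrow> mon (\<lambda>j. if j = i then 1 else 0) (\<lambda>_. 0) = X i"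
  unfolding mon_eq by (simp add: prod.delta' if_distrib[where f="\<lambda>k. X _ ^ k"] cong: if_cong)

lemma mon_Y: "i \<in> {2..n} \<Longrightarrow> mon (\<lambda>_. 0) (\<lambda>j. if j = i then 1 else 0) = F i * Xinv i"
  unfolding mon_eq by (simp add: prod.delta' if_distrib[where f="\<lambda>k. _ ^ k"] cong: if_cong)

lemma monom_mon:
  assumes "Poly_Mapping.keys m \<subseteq> {1..n}" "\<forall>i. Poly_Mapping.lookup m i \<ge> 0"
  shows "monom m * mon c d = X 1 ^ nat (Poly_Mapping.lookup m 1) * mon (\<lambda>i. nat (Poly_Mapping.lookup m i) + c i) d"
proof -
  have s: "{1..n} = insert 1 {2..n}" using n2 by auto
  have "monom m = (\<Prod>j\<in>{1..n}. X j ^ nat (Poly_Mapping.lookup m j) :: 'a lpoly)"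
    by (rule monom_poly[OF assms])
  also have "\<dots> = X 1 ^ nat (Poly_Mapping.lookup m 1) * (\<Prod>j\<in>{2..n}. X j ^ nat (Poly_Mapping.lookup m j))"
    unfolding s by simp
  also have "(\<Prod>j\<in>{2..n}. X j ^ nat (Poly_Mapping.lookup m j)) = mon (\<lambda>j. nat (Poly_Mapping.lookup m j)) (\<lambda>_. 0)"
    unfolding mon_eq by simp
  finally show ?thesis by (simp add: mult.assoc mon_mult)
qed


lemma lead_mon: "lead n (mon c d) (Eexp c d) 1"
proof -
  have "lead n (monom (expo c d) :: 'a lpoly) (expo c d) 1"
    unfolding monom_def by (rule lead_single) simp
  moreover have "lead n (Fprod d) (\<Sum>i\<in>{2..n}. \<Sum>t<d i. v i) 1"
    unfolding Fprod_def using lead_power Flead by (intro lead_prod) blast+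
  ultimately have "lead n (monom (expo c d) * Fprod d) (expo c d + (\<Sum>i\<in>{2..n}. \<Sum>t<d i. v i)) (1 * 1)"
    by (intro lead_mult) simp_all
  then show ?thesis by (simp add: mon_def Eexp_def)
qed

lemma lookup_expo: "Poly_Mapping.lookup (expo c d) i = (if i \<in> {2..n} then int (c i) - int (d i) else 0)"
  unfolding expo_def by (simp add: lookup_sum lookup_single when_def)

lemma lookup_Eexp: "Poly_Mapping.lookup (Eexp c d) i =
   (if i \<in> {2..n} then int (c i) - int (d i) else 0) + (\<Sum>j\<in>{2..n}. int (d j) * Poly_Mapping.lookup (v j) i)"
  unfolding Eexp_def by (simp only: lookup_add lookup_sum lookup_expo) simp

lemma lookup_Eexp1: "Poly_Mapping.lookup (Eexp c d) 1 = 0"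
  unfolding lookup_Eexp using vzero by simp

lemma Eexp_vars: "in_vars n (Eexp c d)"
  unfolding in_vars_def
proof
  fix i assume "i \<in> Poly_Mapping.keys (Eexp c d)"
  then have ne: "Poly_Mapping.lookup (Eexp c d) i \<noteq> 0" by (simp add: in_keys_iff)
  show "i \<in> {1..n}"
  proof (rule ccontr)
    assume i: "i \<notin> {1..n}"
    then have "\<And>j. j \<in> {2..n} \<Longrightarrow> Poly_Mapping.lookup (v j) i = 0"
    proof -
      fix j assume "j \<in> {2..n}"
      then have "i \<notin> Poly_Mapping.keys (v j)" using vvars i unfolding in_vars_def by blast
      then show "Poly_Mapping.lookup (v j) i = 0" by (simp add: in_keys_iff)
    qed
    moreover have i2: "i \<notin> {2..n}" using i by auto
    ultimately have "Poly_Mapping.lookup (Eexp c d) i = 0" unfolding lookup_Eexp if_not_P[OF i2] by simp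
    then show False using ne by simp
  qed
qed

lemma Eexp_inj:
  assumes "(c, d) \<in> Norm" "(c', d') \<in> Norm" "Eexp c d = Eexp c' d'"
  shows "c = c' \<and> d = d'"
proof -
  have main: "i \<in> {2..n} \<longrightarrow> c i = c' i \<and> d i = d' i" for i
  proof (induction i rule: less_induct)
    case (less i)
    show ?case
    proof
      assume i: "i \<in> {2..n}"
      have "(\<Sum>j\<in>{2..n}. int (d j) * Poly_Mapping.lookup (v j) i) = (\<Sum>j\<in>{2..n}. int (d' j) * Poly_Mapping.lookup (v j) i)"
      proof (rule sum.cong)
        fix j assume j: "j \<in> {2..n}"
        show "int (d j) * Poly_Mapping.lookup (v j) i = int (d' j) * Poly_Mapping.lookup (v j) i"
        proof (cases "j < i")
          case True then show ?thesis using less.IH[of j] j by simp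
        next
          case False
          then have "i \<in> {1..j}" using i by auto
          then show ?thesis using vzero[OF j] by simp
        qed
      qed simp
      moreover have "Poly_Mapping.lookup (Eexp c d) i = Poly_Mapping.lookup (Eexp c' d') i" using assms(3) by simp
      ultimately have "int (c i) - int (d i) = int (c' i) - int (d' i)" using i unfolding lookup_Eexp by simp
      moreover have "c i = 0 \<or> d i = 0" "c' i = 0 \<or> d' i = 0" using assms(1,2) unfolding Norm_def by auto
      ultimately show "c i = c' i \<and> d i = d' i" by linarith
    qed
  qed
  have "c i = c' i \<and> d i = d' i" for i
  proof (cases "i \<in> {2..n}")
    case True then show ?thesis using main by blast
  next
    case False then show ?thesis using assms(1,2) unfolding Norm_def by auto
  qed
  then show ?thesis by auto
qed


inductive_set Wset :: "'a lpoly set" where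
  W0: "0 \<in> Wset"
| Wt: "(c, d) \<in> Norm \<Longrightarrow> const r * mon c d \<in> Wset"
| Wadd: "p \<in> Wset \<Longrightarrow> q \<in> Wset \<Longrightarrow> p + q \<in> Wset"

lemma W_rep: "w \<in> Wset \<Longrightarrow> \<exists>K r. finite K \<and> K \<subseteq> Norm \<and> w = (\<Sum>k\<in>K. const (r k) * mon (fst k) (snd k))"
proof (induction rule: Wset.induct)
  case W0
  show ?case by (intro exI[of _ "{}"]) simp
next
  case (Wt c d r)
  show ?case using Wt by (intro exI[of _ "{(c, d)}"] exI[of _ "\<lambda>_. r"]) simp
next
  case (Wadd p q)
  obtain K1 r1 where 1: "finite K1" "K1 \<subseteq> Norm" "p = (\<Sum>k\<in>K1. const (r1 k) * mon (fst k) (snd k))"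
    using Wadd.IH(1) by blast
  obtain K2 r2 where 2: "finite K2" "K2 \<subseteq> Norm" "q = (\<Sum>k\<in>K2. const (r2 k) * mon (fst k) (snd k))"
    using Wadd.IH(2) by blast
  define r where "r k = (if k \<in> K1 then r1 k else 0) + (if k \<in> K2 then r2 k else 0)" for k
  have "(\<Sum>k\<in>K1 \<union> K2. const (r k) * mon (fst k) (snd k)) =
     (\<Sum>k\<in>K1 \<union> K2. (if k \<in> K1 then const (r1 k) * mon (fst k) (snd k) else 0) + (if k \<in> K2 then const (r2 k) * mon (fst k) (snd k) else 0))"
    by (intro sum.cong refl) (simp add: r_def const_add const_zero distrib_right)
  also have "\<dots> = p + q"
  proof -
    have f: "finite (K1 \<union> K2)" using 1 2 by simp
    have a: "(K1 \<union> K2) \<inter> K1 = K1" "(K1 \<union> K2) \<inter> K2 = K2" by auto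
    show ?thesis
      unfolding sum.distrib sum.inter_restrict[OF f, symmetric] a using 1 2 by simp
  qed
  finally show ?case using 1 2 by (intro exI[of _ "K1 \<union> K2"] exI[of _ r]) auto
qed

lemma W_zero:
  assumes w: "w \<in> Wset" and k1: "\<forall>m\<in>Poly_Mapping.keys w. 1 \<le> Poly_Mapping.lookup m 1"
  shows "w = 0"
proof -
  obtain K r where K: "finite K" "K \<subseteq> Norm" "w = (\<Sum>k\<in>K. const (r k) * mon (fst k) (snd k))"
    using W_rep[OF w] by blast
  define f where "f k = const (r k) * mon (fst k) (snd k)" for k
  define K' where "K' = {k\<in>K. r k \<noteq> 0}"
  have K'K: "K' \<subseteq> K" and fK': "finite K'" using K(1) by (auto simp: K'_def)
  have wK': "w = (\<Sum>k\<in>K'. f k)"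
    unfolding K(3) f_def[symmetric]
    by (rule sum.mono_neutral_right[OF K(1) K'K]) (auto simp: K'_def f_def const_zero)
  show ?thesis
  proof (cases "K' = {}")
    case True then show ?thesis using wK' by simp
  next
    case False
    define E where "E k = Eexp (fst k) (snd k)" for k
    obtain m0 where m0: "m0 \<in> E ` K'" "\<forall>m'\<in>E ` K'. m' \<noteq> m0 \<longrightarrow> lex_less n m0 m'"
      using lex_min[of "E ` K'" n] fK' False Eexp_vars unfolding E_def by auto
    obtain k0 where k0: "k0 \<in> K'" "m0 = E k0" using m0(1) by blast
    have norm: "\<And>k. k \<in> K' \<Longrightarrow> (fst k, snd k) \<in> Norm" using K'K K(2) by auto
    have lk: "Poly_Mapping.lookup (f k) m0 = (if k = k0 then r k0 else 0)" if k: "k \<in> K'" for k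
    proof (cases "k = k0")
      case True
      then show ?thesis using lead_mon[of "fst k0" "snd k0"] k0
        by (simp add: f_def lookup_const_mult lead_def E_def)
    next
      case False
      have "E k \<noteq> E k0"
      proof
        assume "E k = E k0"
        then have "fst k = fst k0 \<and> snd k = snd k0"
          using Eexp_inj[OF norm[OF k] norm[OF k0(1)]] unfolding E_def by blast
        then show False using False by (simp add: prod_eq_iff)
      qed
      then have lt: "lex_less n m0 (E k)" using m0(2) k k0 by auto
      have "Poly_Mapping.lookup (mon (fst k) (snd k)) m0 = 0"
      proof (rule ccontr)
        assume "Poly_Mapping.lookup (mon (fst k) (snd k)) m0 \<noteq> 0"
        then have "m0 \<in> Poly_Mapping.keys (mon (fst k) (snd k))" by (simp add: in_keys_iff)
        moreover have "m0 \<noteq> E k" using lt lex_irrefl by metis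
        ultimately have "lex_less n (E k) m0" using lead_mon[of "fst k" "snd k"] unfolding lead_def E_def by blast
        then show False using lt lex_asym by blast
      qed
      then show ?thesis using False by (simp add: f_def lookup_const_mult)
    qed
    have "Poly_Mapping.lookup w m0 = (\<Sum>k\<in>K'. if k = k0 then r k0 else 0)"
      unfolding wK' lookup_sum using lk by (intro sum.cong) auto
    also have "\<dots> = r k0" using k0(1) fK' by simp
    finally have "Poly_Mapping.lookup w m0 \<noteq> 0" using k0(1) by (simp add: K'_def)
    then have "m0 \<in> Poly_Mapping.keys w" by (simp add: in_keys_iff)
    then have "1 \<le> Poly_Mapping.lookup m0 1" using k1 by blast
    moreover have "Poly_Mapping.lookup m0 1 = 0" using k0 lookup_Eexp1 unfolding E_def by simp
    ultimately show ?thesis by simp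
  qed
qed

definition SS :: "'a lpoly set" where
  "SS = {p. \<exists>c w. c \<in> CC \<and> w \<in> Wset \<and> p = X 1 * c + w}"

lemma W_C: "w \<in> Wset \<Longrightarrow> w \<in> CC"
proof (induction rule: Wset.induct)
  case W0 then show ?case by (rule rg_zero)
next
  case (Wt c d r) then show ?case by (intro ring_gen.mult ring_gen.const mon_in)
next
  case (Wadd p q) from Wadd.IH show ?case by (rule ring_gen.add)
qed

lemma W_neg: "w \<in> Wset \<Longrightarrow> - w \<in> Wset"
proof (induction rule: Wset.induct)
  case W0 then show ?case by (simp add: Wset.W0)
next
  case (Wt c d r)
  have "- (const r * mon c d) = const (- r) * mon c d" by (simp add: const_def single_uminus)
  then show ?case using Wset.Wt[OF Wt] by simp
next
  case (Wadd p q)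
  have "- (p + q) = - p + - q" by simp
  then show ?case using Wset.Wadd[OF Wadd.IH] by simp
qed

lemma W_smul: "w \<in> Wset \<Longrightarrow> const a * w \<in> Wset"
proof (induction rule: Wset.induct)
  case W0 then show ?case by (simp add: Wset.W0)
next
  case (Wt c d r)
  have "const a * (const r * mon c d) = const (a * r) * mon c d" by (simp add: const_mult mult.assoc[symmetric])
  then show ?case using Wset.Wt[OF Wt] by simp
next
  case (Wadd p q) then show ?case by (simp add: Wset.Wadd distrib_left)
qed

lemma S_add: "p \<in> SS \<Longrightarrow> q \<in> SS \<Longrightarrow> p + q \<in> SS"
proof -
  assume "p \<in> SS" "q \<in> SS"
  then obtain c w c' w' where "c \<in> CC" "w \<in> Wset" "p = X 1 * c + w" "c' \<in> CC" "w' \<in> Wset" "q = X 1 * c' + w'"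
    unfolding SS_def by blast
  moreover have "p + q = X 1 * (c + c') + (w + w')" using calculation by (simp add: algebra_simps)
  ultimately show ?thesis unfolding SS_def by (blast intro: ring_gen.add Wset.Wadd)
qed

lemma S_neg: "p \<in> SS \<Longrightarrow> - p \<in> SS"
proof -
  assume "p \<in> SS"
  then obtain c w where "c \<in> CC" "w \<in> Wset" "p = X 1 * c + w" unfolding SS_def by blast
  moreover have "- p = X 1 * (- c) + (- w)" using calculation by (simp add: algebra_simps)
  ultimately show ?thesis unfolding SS_def by (blast intro: ring_gen.neg W_neg)
qed

lemma S_smul: "p \<in> SS \<Longrightarrow> const a * p \<in> SS"
proof -
  assume "p \<in> SS"
  then obtain c w where "c \<in> CC" "w \<in> Wset" "p = X 1 * c + w" unfolding SS_def by blast
  moreover have "const a * p = X 1 * (const a * c) + const a * w" using calculation by (simp add: algebra_simps)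
  ultimately show ?thesis unfolding SS_def by (blast intro: ring_gen.mult ring_gen.const W_smul)
qed

lemma S_X1: "c \<in> CC \<Longrightarrow> X 1 * c \<in> SS"
  unfolding SS_def using Wset.W0 by force

lemma S_W: "w \<in> Wset \<Longrightarrow> w \<in> SS"
  unfolding SS_def using rg_zero by force

lemma S_zero: "0 \<in> SS" using S_W Wset.W0 by blast

lemma S_sum: "(\<And>i. i \<in> I \<Longrightarrow> f i \<in> SS) \<Longrightarrow> (\<Sum>i\<in>I. f i) \<in> SS"
proof (induction I rule: infinite_finite_induct)
  case (infinite A) then show ?case by (simp add: S_zero)
next
  case empty then show ?case by (simp add: S_zero)
next
  case (insert x F)
  then have "f x + (\<Sum>i\<in>F. f i) \<in> SS" by (intro S_add) auto
  then show ?case using insert by simp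
qed


lemma F_expand: "F i = (\<Sum>m\<in>Poly_Mapping.keys (F i). const (Poly_Mapping.lookup (F i) m) * monom m)"
  using pm_expand[of "F i"] by (simp add: single_const_monom)

lemma mon_S_aux: "\<forall>c d. (\<Sum>i\<in>{2..n}. d i) = N \<longrightarrow> mon c d \<in> SS"
proof (induction N rule: less_induct)
  case (less N)
  show ?case
  proof (intro allI impI)
    fix c d assume sd: "(\<Sum>i\<in>{2..n}. d i) = N"
    show "mon c d \<in> SS"
    proof (cases "\<exists>i\<in>{2..n}. 0 < c i \<and> 0 < d i")
      case True
      then obtain i where i: "i \<in> {2..n}" "0 < c i" "0 < d i" by blast
      define c0 where "c0 = c(i := c i - 1)"
      define d0 where "d0 = d(i := d i - 1)"
      have "(\<Sum>j\<in>{2..n}. d j) = d i + (\<Sum>j\<in>{2..n} - {i}. d j)"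
        using i(1) by (simp add: sum.remove)
      moreover have "(\<Sum>j\<in>{2..n}. d0 j) = d0 i + (\<Sum>j\<in>{2..n} - {i}. d0 j)"
        using i(1) by (simp add: sum.remove)
      moreover have "(\<Sum>j\<in>{2..n} - {i}. d0 j) = (\<Sum>j\<in>{2..n} - {i}. d j)"
        unfolding d0_def by (intro sum.cong) auto
      ultimately have lt: "(\<Sum>j\<in>{2..n}. d0 j) < N" using sd i(3) by (simp add: d0_def)
      have "mon c d = F i * mon c0 d0" unfolding c0_def d0_def using i by (rule mon_step[of i c d])
      also have "\<dots> = (\<Sum>m\<in>Poly_Mapping.keys (F i). const (Poly_Mapping.lookup (F i) m) * (monom m * mon c0 d0))"
        by (subst F_expand) (simp add: sum_distrib_right mult.assoc)
      also have "\<dots> \<in> SS"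
      proof (rule S_sum)
        fix m assume m: "m \<in> Poly_Mapping.keys (F i)"
        have mk: "Poly_Mapping.keys m \<subseteq> {1..n}" "\<forall>j. Poly_Mapping.lookup m j \<ge> 0"
          using Fpoly[OF i(1)] m unfolding polyring_def in_vars_def by auto
        define c1 where "c1 = (\<lambda>j. nat (Poly_Mapping.lookup m j) + c0 j)"
        have eq: "monom m * mon c0 d0 = X 1 ^ nat (Poly_Mapping.lookup m 1) * mon c1 d0"
          unfolding c1_def by (rule monom_mon[OF mk])
        show "const (Poly_Mapping.lookup (F i) m) * (monom m * mon c0 d0) \<in> SS"
        proof (cases "nat (Poly_Mapping.lookup m 1)")
          case 0
          have "mon c1 d0 \<in> SS" using less.IH[OF lt] by blast
          then show ?thesis unfolding eq 0 by (simp add: S_smul)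
        next
          case (Suc k)
          have "const (Poly_Mapping.lookup (F i) m) * (monom m * mon c0 d0) =
                X 1 * (const (Poly_Mapping.lookup (F i) m) * (X 1 ^ k * mon c1 d0))"
            unfolding eq Suc by (simp add: mult_ac)
          also have "\<dots> \<in> SS"
            by (intro S_X1 ring_gen.mult ring_gen.const rg_power mon_in Xxp_in(3))
          finally show ?thesis .
        qed
      qed
      finally show ?thesis .
    next
      case False
      define c' where "c' = (\<lambda>j. if j \<in> {2..n} then c j else 0)"
      define d' where "d' = (\<lambda>j. if j \<in> {2..n} then d j else 0)"
      have N: "(c', d') \<in> Norm" using False unfolding Norm_def c'_def d'_def by auto
      have "mon c d = mon c' d'" by (rule mon_cong) (simp add: c'_def d'_def)
      also have "\<dots> = const 1 * mon c' d'" by (simp add: const_one)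
      also have "\<dots> \<in> SS" by (rule S_W, rule Wset.Wt[OF N])
      finally show ?thesis .
    qed
  qed
qed

lemma mon_S: "mon c d \<in> SS"
  using mon_S_aux by blast

lemma W_mult_S: "w \<in> Wset \<Longrightarrow> w' \<in> Wset \<Longrightarrow> w * w' \<in> SS"
proof (induction w rule: Wset.induct)
  case W0 then show ?case by (simp add: S_zero)
next
  case (Wadd p q) then show ?case by (simp add: distrib_right S_add)
next
  case (Wt c d r)
  from Wt(2) show ?case
  proof (induction w' rule: Wset.induct)
    case W0 then show ?case by (simp add: S_zero)
  next
    case (Wadd p q) then show ?case by (simp add: distrib_left S_add)
  next
    case (Wt c' d' r')
    have "const r * mon c d * (const r' * mon c' d') = const (r * r') * (mon c d * mon c' d')"
      by (simp add: const_mult[symmetric] mult_ac)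
    then show ?case by (simp add: mon_mult S_smul mon_S)
  qed
qed

lemma C_S: "p \<in> CC \<Longrightarrow> p \<in> SS"
proof (induction rule: ring_gen.induct)
  case (const c)
  have N: "((\<lambda>_. 0), (\<lambda>_. 0)) \<in> Norm" unfolding Norm_def by simp
  have "const c * mon (\<lambda>_. 0) (\<lambda>_. 0) \<in> SS" by (rule S_W, rule Wset.Wt[OF N])
  then show ?case by (simp add: mon_zero)
next
  case (gen g)
  then consider "g = X 1" | i where "i \<in> {2..n}" "g = X i" | i where "i \<in> {2..n}" "g = xprime n F i"
    unfolding GC_def by blast
  then show ?case
  proof cases
    case 1
    then show ?thesis using S_X1[OF rg_one] by simp
  next
    case (2 i)
    have N: "((\<lambda>j. if j = i then 1 else 0), (\<lambda>_. 0)) \<in> Norm" unfolding Norm_def using 2 by auto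
    have "const 1 * mon (\<lambda>j. if j = i then 1 else 0) (\<lambda>_. 0) \<in> SS" by (rule S_W, rule Wset.Wt[OF N])
    then show ?thesis using 2 by (simp add: mon_X const_one)
  next
    case (3 i)
    have N: "((\<lambda>_. 0), (\<lambda>j. if j = i then 1 else 0)) \<in> Norm" unfolding Norm_def using 3 by auto
    have "const 1 * mon (\<lambda>_. 0) (\<lambda>j. if j = i then 1 else 0) \<in> SS" by (rule S_W, rule Wset.Wt[OF N])
    then show ?thesis using 3 by (simp add: mon_Y const_one xp)
  qed
next
  case (add p q) from add.IH show ?case by (rule S_add)
next
  case (neg p) from neg.IH show ?case by (rule S_neg)
next
  case (mult p q)
  obtain c w where cw: "c \<in> CC" "w \<in> Wset" "p = X 1 * c + w" using mult.IH(1) unfolding SS_def by blast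
  obtain c' w' where cw': "c' \<in> CC" "w' \<in> Wset" "q = X 1 * c' + w'" using mult.IH(2) unfolding SS_def by blast
  obtain c'' w'' where cw'': "c'' \<in> CC" "w'' \<in> Wset" "w * w' = X 1 * c'' + w''"
    using W_mult_S[OF cw(2) cw'(2)] unfolding SS_def by blast
  have "p * q = X 1 * (c * q + w * c' + c'') + w''"
    using cw cw' cw'' by (simp add: algebra_simps)
  moreover have "c * q + w * c' + c'' \<in> CC"
    using cw cw' cw'' mult.hyps W_C by (intro ring_gen.add ring_gen.mult) auto
  ultimately show ?case unfolding SS_def using cw'' by blast
qed

lemma nonneg1_X: "nonneg1 (X j :: 'a lpoly)" by (simp add: nonneg1_def X_def monom_def)
lemma nonneg1_Xinv: "j \<noteq> 1 \<Longrightarrow> nonneg1 (Xinv j :: 'a lpoly)" by (simp add: nonneg1_def Xinv_def monom_def lookup_single when_def)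

lemma nonneg1_F: "i \<in> {2..n} \<Longrightarrow> nonneg1 (F i)"
  using Fpoly unfolding nonneg1_def polyring_def by auto

lemma CC_nonneg1: "p \<in> CC \<Longrightarrow> nonneg1 p"
proof (rule rg_nonneg1)
  show "\<forall>g\<in>GC. nonneg1 g"
    unfolding GC_def using nonneg1_X nonneg1_Xinv nonneg1_F xp by (auto intro!: nonneg1_mult)
qed

lemma X1_keys: "nonneg1 (p :: 'a lpoly) \<Longrightarrow> \<forall>m\<in>Poly_Mapping.keys (X 1 * p). 1 \<le> Poly_Mapping.lookup m 1"
proof
  fix m assume p: "nonneg1 p" and m: "m \<in> Poly_Mapping.keys (X 1 * p)"
  have "m \<in> {a + b |a b. a \<in> Poly_Mapping.keys (X 1 :: 'a lpoly) \<and> b \<in> Poly_Mapping.keys p}"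
    using subsetD[OF keys_mult m] .
  then obtain a b where "m = a + b" "a \<in> Poly_Mapping.keys (X 1 :: 'a lpoly)" "b \<in> Poly_Mapping.keys p"
    by blast
  then show "1 \<le> Poly_Mapping.lookup m 1" using p unfolding nonneg1_def by (auto simp: X_def monom_def lookup_add)
qed

lemma key_lemma:
  assumes z: "z \<in> CC" and k: "\<forall>m\<in>Poly_Mapping.keys z. 1 \<le> Poly_Mapping.lookup m 1"
  shows "\<exists>c\<in>CC. z = X 1 * c"
proof -
  obtain c w where cw: "c \<in> CC" "w \<in> Wset" "z = X 1 * c + w" using C_S[OF z] unfolding SS_def by blast
  have w: "w = z - X 1 * c" using cw by simp
  have "\<forall>m\<in>Poly_Mapping.keys w. 1 \<le> Poly_Mapping.lookup m 1"
    using keys_diff[of z "X 1 * c"] k X1_keys[OF CC_nonneg1[OF cw(1)]] unfolding w by blast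
  then have "w = 0" using W_zero[OF cw(2)] by blast
  then show ?thesis using cw by auto
qed


lemma stepA:
  assumes "y \<in> ring_gen ({X 1, Xinv 1} \<union> (\<Union>i\<in>{2..n}. {X i, xprime n F i}))"
  shows "\<exists>N. X 1 ^ N * y \<in> CC"
  using assms
proof (induction rule: ring_gen.induct)
  case (const c)
  show ?case by (rule exI[of _ 0]) (simp add: ring_gen.const)
next
  case (gen g)
  show ?case
  proof (cases "g = Xinv 1")
    case True
    have "X 1 ^ 1 * g = 1" using True Xinv_X[of 1] by (simp add: mult.commute)
    then show ?thesis using rg_one by metis
  next
    case False
    then have "g \<in> GC" using gen unfolding GC_def by auto
    then have "X 1 ^ 0 * g \<in> CC" by (simp add: ring_gen.gen)
    then show ?thesis by blast
  qed
next
  case (add p q)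
  obtain N1 N2 where "X 1 ^ N1 * p \<in> CC" "X 1 ^ N2 * q \<in> CC" using add.IH by blast
  then have "X 1 ^ N2 * (X 1 ^ N1 * p) + X 1 ^ N1 * (X 1 ^ N2 * q) \<in> CC"
    using ring_gen.mult[OF rg_power[OF Xxp_in(3)]] by (intro ring_gen.add) auto
  moreover have "X 1 ^ N2 * (X 1 ^ N1 * p) + X 1 ^ N1 * (X 1 ^ N2 * q) = X 1 ^ (N1 + N2) * (p + q)"
    by (simp add: power_add algebra_simps)
  ultimately show ?case by metis
next
  case (mult p q)
  obtain N1 N2 where "X 1 ^ N1 * p \<in> CC" "X 1 ^ N2 * q \<in> CC" using mult.IH by blast
  then have "(X 1 ^ N1 * p) * (X 1 ^ N2 * q) \<in> CC" by (rule ring_gen.mult)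
  moreover have "(X 1 ^ N1 * p) * (X 1 ^ N2 * q) = X 1 ^ (N1 + N2) * (p * q)"
    by (simp add: power_add algebra_simps)
  ultimately show ?case by metis
next
  case (neg p)
  obtain N where "X 1 ^ N * p \<in> CC" using neg.IH by blast
  then have "- (X 1 ^ N * p) \<in> CC" by (rule ring_gen.neg)
  then show ?case by (metis mult_minus_right)
qed

lemma stepB: "\<forall>y. nonneg1 y \<longrightarrow> X 1 ^ N * y \<in> CC \<longrightarrow> y \<in> CC"
proof (induction N)
  case 0 then show ?case by simp
next
  case (Suc N)
  show ?case
  proof (intro allI impI)
    fix y :: "'a lpoly" assume y: "nonneg1 y" and z: "X 1 ^ Suc N * y \<in> CC"
    have nn: "nonneg1 (X 1 ^ N * y)"
      by (rule nonneg1_mult[OF _ y]) (simp add: X_pow nonneg1_def monom_def)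
    have "\<forall>m\<in>Poly_Mapping.keys (X 1 * (X 1 ^ N * y)). 1 \<le> Poly_Mapping.lookup m 1"
      by (rule X1_keys[OF nn])
    moreover have z': "X 1 * (X 1 ^ N * y) \<in> CC" using z by (simp add: mult.assoc)
    ultimately obtain c where c: "c \<in> CC" "X 1 * (X 1 ^ N * y) = X 1 * c"
      using key_lemma by blast
    then have "Xinv 1 * (X 1 * (X 1 ^ N * y)) = Xinv 1 * (X 1 * c)" by simp
    then have "X 1 ^ N * y = c" by (simp add: mult.assoc[symmetric] Xinv_X)
    then show "y \<in> CC" using Suc.IH y c by blast
  qed
qed

lemma main_loc0:
  "ring_gen ({X 1} \<union> (\<Union>i\<in>{2..n}. {X i, Xinv i}))
       \<inter> ring_gen ({X 1, Xinv 1} \<union> (\<Union>i\<in>{2..n}. {X i, xprime n F i}))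
       = CC"
  (is "ring_gen ?GA \<inter> ring_gen ?GB = _")
proof
  show "ring_gen ?GA \<inter> ring_gen ?GB \<subseteq> CC"
  proof
    fix y assume y: "y \<in> ring_gen ?GA \<inter> ring_gen ?GB"
    have "nonneg1 y"
    proof (rule rg_nonneg1)
      show "\<forall>g\<in>?GA. nonneg1 g"
      proof
        fix g assume "g \<in> ?GA"
        then consider "g = X 1" | i where "i \<in> {2..n}" "g = X i" | i where "i \<in> {2..n}" "g = Xinv i" by blast
        then show "nonneg1 g" by cases (auto simp: nonneg1_X nonneg1_Xinv)
      qed
      show "y \<in> ring_gen ?GA" using y by blast
    qed
    moreover obtain N where "X 1 ^ N * y \<in> CC" using stepA y by blast
    ultimately show "y \<in> CC" using stepB by blast
  qed
next
  have "GC \<subseteq> ring_gen ?GA"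
  proof
    fix g assume "g \<in> GC"
    then consider "g = X 1" | i where "i \<in> {2..n}" "g = X i" | i where "i \<in> {2..n}" "g = xprime n F i"
      unfolding GC_def by blast
    then show "g \<in> ring_gen ?GA"
    proof cases
      case 1 then show ?thesis by (intro ring_gen.gen) simp
    next
      case (2 i) then show ?thesis by (intro ring_gen.gen) auto
    next
      case (3 i)
      have Xs: "\<forall>j\<in>{1..n}. X j \<in> ring_gen ?GA"
      proof
        fix j assume "j \<in> {1..n}"
        then have "X j \<in> ?GA" by (cases "j = 1") auto
        then show "X j \<in> ring_gen ?GA" by (rule ring_gen.gen)
      qed
      have "F i \<in> ring_gen ?GA" by (rule poly_in_rg[OF Xs Fpoly[OF 3(1)]])
      moreover have "Xinv i \<in> ring_gen ?GA" using 3 by (intro ring_gen.gen) auto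
      ultimately have "F i * Xinv i \<in> ring_gen ?GA" by (rule ring_gen.mult)
      then show ?thesis using 3 xp by simp
    qed
  qed
  then have "CC \<subseteq> ring_gen ?GA" by (rule rg_mono)
  moreover have "CC \<subseteq> ring_gen ?GB"
  proof (rule rg_mono)
    have "GC \<subseteq> ?GB" unfolding GC_def by auto
    then show "GC \<subseteq> ring_gen ?GB" using ring_gen.gen by blast
  qed
  ultimately show "CC \<subseteq> ring_gen ?GA \<inter> ring_gen ?GB" by blast
qed

lemma main_loc:
  "ring_gen ({X 1} \<union> (\<Union>i\<in>{2..n}. {X i, Xinv i}))
       \<inter> ring_gen ({X 1, Xinv 1} \<union> (\<Union>i\<in>{2..n}. {X i, xprime n F i}))
       = ring_gen ({X 1} \<union> (\<Union>i\<in>{2..n}. {X i, xprime n F i}))"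
  using main_loc0 unfolding GC_def .

end


lemma first_exp:
  assumes "P \<in> polyring n" "P \<noteq> 0"
  shows "lex_first_exp n P \<in> Poly_Mapping.keys P \<and> (\<forall>m'\<in>Poly_Mapping.keys P. m' \<noteq> lex_first_exp n P \<longrightarrow> lex_less n (lex_first_exp n P) m')"
proof -
  have "\<forall>s\<in>Poly_Mapping.keys P. in_vars n s" using assms(1) unfolding polyring_def by blast
  moreover have "Poly_Mapping.keys P \<noteq> {}" using assms(2) by simp
  ultimately obtain m where m: "m \<in> Poly_Mapping.keys P" "\<forall>m'\<in>Poly_Mapping.keys P. m' \<noteq> m \<longrightarrow> lex_less n m m'"
    using lex_min[of "Poly_Mapping.keys P" n] by auto
  have "lex_first_exp n P = m"
    unfolding lex_first_exp_def
  proof (rule the_equality)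
    show "m \<in> Poly_Mapping.keys P \<and> (\<forall>m'\<in>Poly_Mapping.keys P. m' \<noteq> m \<longrightarrow> lex_less n m m')" using m by blast
  next
    fix m2 assume m2: "m2 \<in> Poly_Mapping.keys P \<and> (\<forall>m'\<in>Poly_Mapping.keys P. m' \<noteq> m2 \<longrightarrow> lex_less n m2 m')"
    show "m2 = m"
    proof (rule ccontr)
      assume ne: "m2 \<noteq> m"
      then have "lex_less n m m2" "lex_less n m2 m" using m m2 by auto
      then show False using lex_asym by blast
    qed
  qed
  then show ?thesis using m by simp
qed

theorem lemma4p20:
  fixes F :: "nat \<Rightarrow> 'a::{factorial_semiring, idom, ring_char_0} lpoly"
    and n :: nat
  assumes "n \<ge> 2"
    and "LP_seed n F"
    and "condition_1_2 n F"
  shows "ring_gen ({X 1} \<union> (\<Union>i\<in>{2..n}. {X i, Xinv i}))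
       \<inter> ring_gen ({X 1, Xinv 1} \<union> (\<Union>i\<in>{2..n}. {X i, xprime n F i}))
       = ring_gen ({X 1} \<union> (\<Union>i\<in>{2..n}. {X i, xprime n F i}))"
proof -
  have Fp: "F i \<in> polyring n" "F i \<noteq> 0" if "i \<in> {1..n}" for i
    using assms(2) that unfolding LP_seed_def irreducible_in_def by auto
  have c12: "hatF n F k = F k" "Poly_Mapping.lookup (F k) (lex_first_exp n (F k)) = 1"
     "\<forall>i\<in>{1..k}. Poly_Mapping.lookup (lex_first_exp n (F k)) i = 0" if "k \<in> {1..n}" for k
    using assms(3) that unfolding condition_1_2_def by auto
  interpret L: LPsetup n F "\<lambda>i. lex_first_exp n (F i)"
  proof
    show "n \<ge> 2" by (rule assms(1))
  next
    fix i assume i: "i \<in> {2..n}"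
    then have i1: "i \<in> {1..n}" by auto
    show "F i \<in> polyring n" using Fp[OF i1] by simp
    show "lead n (F i) (lex_first_exp n (F i)) 1"
      unfolding lead_def using first_exp[OF Fp[OF i1]] c12(2)[OF i1] by simp
    show "in_vars n (lex_first_exp n (F i))"
      using first_exp[OF Fp[OF i1]] Fp(1)[OF i1] unfolding polyring_def by blast
    show "xprime n F i = F i * Xinv i"
      unfolding xprime_def using c12(1)[OF i1] by simp
  next
    fix i j assume i: "i \<in> {2..n}" and j: "j \<in> {1..i}"
    then have i1: "i \<in> {1..n}" by auto
    show "Poly_Mapping.lookup (lex_first_exp n (F i)) j = 0" using c12(3)[OF i1] j by blast
  qed
  show ?thesis by (rule L.main_loc)
qed


end
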